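(* Let $\mathcal{Q}$ be a class of functions $\mathcal{W}\times\mathcal{Y}^2\to[0,1]$ and let $S$ be drawn from $\mathcal{D}$. Then for every $\delta\in(0,1)$, with probability at least $1-\delta$ over $S$, the following holds simultaneously for all $Q\in\mathcal{Q}$: $$\mathbb{E}_{\mathcal{D}}[Q]\le\hat{\mathbb{E}}_S[Q]+R^{AUC}(\mathcal{Q})+\sqrt{\frac{\ln(1/\delta)(n-1)^2}{2m^2}\sum_{i=1}^m\frac{1}{|\omega_i|\,|\bar\omega_i|^2}}.$$
   Context: Users $w_1,\dots,w_m$ and $n$ items $y_1,\dots,y_n$. For each user $i$, $n_i$ items are drawn independently from a distribution $\mathcal{D}_i$; $\omega_i\subseteq\{1,\dots,n\}$ is the index set of drawn items ($|\omega_i|=n_i\ge1$), $\bar\omega_i=\{1,\dots,n\}\setminus\omega_i$, $n_i'=|\bar\omega_i|\ge1$; the sample $S=\bigcup_i\{(w_i,y_p):p\in\omega_i\}$ is distributed as $\mathcal{D}=\mathcal{D}_1^{n_1}\times\cdots\times\mathcal{D}_m^{n_m}$. For $Q:\mathcal{W}\times\mathcal{Y}^2\to[0,1]$, $\hat{\mathbb{E}}_S[Q]=\frac1m\sum_{i=1}^m\frac{1}{n_in_i'}\sum_{p\in\omega_i}\sum_{q\in\bar\omega_i}Q(w_i,y_p,y_q)$ and $\mathbb{E}_{\mathcal{D}}[Q]=\mathbb{E}_{S\sim\mathcal{D}}[\hat{\mathbb{E}}_S[Q]]$. The empirical AUC Rademacher average is $\hat{R}^{AUC}(\mathcal{Q})=2\,\mathbb{E}_\nu\Big[\sup_{Q\in\mathcal{Q}}\frac1m\sum_{i=1}^m\frac{\nu_i}{n_in_i'}\sum_{p\in\omega_i}\sum_{q\in\bar\omega_i}Q(w_i,y_p,y_q)\Big]$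 with $\nu_1,\dots,\nu_m$ independent uniform $\{-1,+1\}$ variables, and $R^{AUC}(\mathcal{Q})=\mathbb{E}_{S\sim\mathcal{D}}[\hat{R}^{AUC}(\mathcal{Q})]$. *)

theory Defs
  imports "HOL-Probability.Probability"
begin

(* Users are w 0 .. w (m-1), items are y 0 .. y (n-1) (indices shifted from 1..n to 0..<n).
   A sample is a function s :: nat \<times> nat \<Rightarrow> nat, where s (i,k) (i < m, k < ns i) is the
   index of the k-th item drawn for user i; ns i is n_i. *)

definition omega :: "(nat \<times> nat \<Rightarrow> nat) \<Rightarrow> (nat \<Rightarrow> nat) \<Rightarrow> nat \<Rightarrow> nat set" where
  "omega s ns i = {s (i, k) | k. k < ns i}"

definition omegabar :: "nat \<Rightarrow> (nat \<times> nat \<Rightarrow> nat) \<Rightarrow> (nat \<Rightarrow> nat) \<Rightarrow> nat \<Rightarrow> nat set" where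
  "omegabar n s ns i = {..<n} - omega s ns i"

definition user_term ::
  "(nat \<Rightarrow> 'w) \<Rightarrow> (nat \<Rightarrow> 'y) \<Rightarrow> nat \<Rightarrow> (nat \<Rightarrow> nat) \<Rightarrow> ('w \<Rightarrow> 'y \<Rightarrow> 'y \<Rightarrow> real)
     \<Rightarrow> (nat \<times> nat \<Rightarrow> nat) \<Rightarrow> nat \<Rightarrow> real" where
  "user_term w y n ns Q s i =
     (1 / (real (ns i) * real (n - ns i))) *
     (\<Sum>p\<in>omega s ns i. \<Sum>q\<in>omegabar n s ns i. Q (w i) (y p) (y q))"

definition emp_risk ::
  "nat \<Rightarrow> (nat \<Rightarrow> 'w) \<Rightarrow> (nat \<Rightarrow> 'y) \<Rightarrow> nat \<Rightarrow> (nat \<Rightarrow> nat) \<Rightarrow> ('w \<Rightarrow> 'y \<Rightarrow> 'y \<Rightarrow> real)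
     \<Rightarrow> (nat \<times> nat \<Rightarrow> nat) \<Rightarrow> real" where
  "emp_risk m w y n ns Q s = (1 / real m) * (\<Sum>i<m. user_term w y n ns Q s i)"

definition sample_dist :: "nat \<Rightarrow> (nat \<Rightarrow> nat) \<Rightarrow> (nat \<Rightarrow> nat pmf) \<Rightarrow> (nat \<times> nat \<Rightarrow> nat) pmf" where
  "sample_dist m ns D = Pi_pmf {(i, k). i < m \<and> k < ns i} 0 (\<lambda>(i, k). D i)"

definition true_risk ::
  "nat \<Rightarrow> (nat \<Rightarrow> 'w) \<Rightarrow> (nat \<Rightarrow> 'y) \<Rightarrow> nat \<Rightarrow> (nat \<Rightarrow> nat) \<Rightarrow> (nat \<Rightarrow> nat pmf)
     \<Rightarrow> ('w \<Rightarrow> 'y \<Rightarrow> 'y \<Rightarrow> real) \<Rightarrow> real" where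
  "true_risk m w y n ns D Q =
     measure_pmf.expectation (sample_dist m ns D) (\<lambda>s. emp_risk m w y n ns Q s)"

definition rademacher_dist :: "nat \<Rightarrow> (nat \<Rightarrow> real) pmf" where
  "rademacher_dist m = Pi_pmf {..<m} 0 (\<lambda>_. pmf_of_set {-1, 1})"

definition emp_rad_auc ::
  "nat \<Rightarrow> (nat \<Rightarrow> 'w) \<Rightarrow> (nat \<Rightarrow> 'y) \<Rightarrow> nat \<Rightarrow> (nat \<Rightarrow> nat) \<Rightarrow> ('w \<Rightarrow> 'y \<Rightarrow> 'y \<Rightarrow> real) set
     \<Rightarrow> (nat \<times> nat \<Rightarrow> nat) \<Rightarrow> real" where
  "emp_rad_auc m w y n ns QQ s =
     2 * measure_pmf.expectation (rademacher_dist m)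
       (\<lambda>\<nu>. SUP Q\<in>QQ. (1 / real m) * (\<Sum>i<m. \<nu> i * user_term w y n ns Q s i))"

definition rad_auc ::
  "nat \<Rightarrow> (nat \<Rightarrow> 'w) \<Rightarrow> (nat \<Rightarrow> 'y) \<Rightarrow> nat \<Rightarrow> (nat \<Rightarrow> nat) \<Rightarrow> (nat \<Rightarrow> nat pmf)
     \<Rightarrow> ('w \<Rightarrow> 'y \<Rightarrow> 'y \<Rightarrow> real) set \<Rightarrow> real" where
  "rad_auc m w y n ns D QQ =
     measure_pmf.expectation (sample_dist m ns D) (\<lambda>s. emp_rad_auc m w y n ns QQ s)"

end

theory Submission
  imports Defs
begin


lemma fexp:
  fixes f :: "'a \<Rightarrow> real"
  assumes "finite (set_pmf M)"
  shows "measure_pmf.expectation M f = (\<Sum>x\<in>set_pmf M. pmf M x * f x)"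
  using integral_measure_pmf_real[OF assms, of M f] by (simp add: mult.commute)

lemma fexp_mono:
  fixes f g :: "'a \<Rightarrow> real"
  assumes "finite (set_pmf M)" "\<And>x. x \<in> set_pmf M \<Longrightarrow> f x \<le> g x"
  shows "measure_pmf.expectation M f \<le> measure_pmf.expectation M g"
  unfolding fexp[OF assms(1)] by (intro sum_mono mult_left_mono assms(2)) auto

lemma fexp_cong:
  fixes f g :: "'a \<Rightarrow> real"
  assumes "finite (set_pmf M)" "\<And>x. x \<in> set_pmf M \<Longrightarrow> f x = g x"
  shows "measure_pmf.expectation M f = measure_pmf.expectation M g"
  unfolding fexp[OF assms(1)] using assms(2) by (intro sum.cong) auto

lemma fexp_const: "measure_pmf.expectation M (\<lambda>_. c) = (c::real)"
  by simp

lemma fexp_add: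
  assumes "finite (set_pmf M)"
  shows "measure_pmf.expectation M (\<lambda>x. f x + g x) = measure_pmf.expectation M f + measure_pmf.expectation M (g::_\<Rightarrow>real)"
  unfolding fexp[OF assms] by (simp add: sum.distrib algebra_simps)

lemma fexp_diff:
  assumes "finite (set_pmf M)"
  shows "measure_pmf.expectation M (\<lambda>x. f x - g x) = measure_pmf.expectation M f - measure_pmf.expectation M (g::_\<Rightarrow>real)"
  unfolding fexp[OF assms] by (simp add: sum_subtractf algebra_simps)

lemma fexp_cmult:
  assumes "finite (set_pmf M)"
  shows "measure_pmf.expectation M (\<lambda>x. c * f x) = c * measure_pmf.expectation M (f::_\<Rightarrow>real)"
  unfolding fexp[OF assms] by (simp add: sum_distrib_left algebra_simps)

lemma fexp_pair:
  fixes f :: "'a \<times> 'b \<Rightarrow> real"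
  assumes "finite (set_pmf A)" "finite (set_pmf B)"
  shows "measure_pmf.expectation (pair_pmf A B) f
       = measure_pmf.expectation A (\<lambda>a. measure_pmf.expectation B (\<lambda>b. f (a, b)))"
proof -
  have "measure_pmf.expectation (pair_pmf A B) f = (\<Sum>x\<in>set_pmf A \<times> set_pmf B. pmf (pair_pmf A B) x * f x)"
    using assms by (subst fexp) auto
  also have "\<dots> = (\<Sum>a\<in>set_pmf A. \<Sum>b\<in>set_pmf B. pmf A a * (pmf B b * f (a, b)))"
    by (subst sum.cartesian_product) (auto simp: pmf_pair mult.assoc case_prod_beta intro!: sum.cong)
  also have "\<dots> = measure_pmf.expectation A (\<lambda>a. measure_pmf.expectation B (\<lambda>b. f (a, b)))"
    using assms by (simp add: fexp sum_distrib_left)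
  finally show ?thesis .
qed

lemma fexp_swap:
  assumes "finite (set_pmf A)" "finite (set_pmf B)"
  shows "measure_pmf.expectation A (\<lambda>a. measure_pmf.expectation B (\<lambda>b. f a b))
       = measure_pmf.expectation B (\<lambda>b. measure_pmf.expectation A (\<lambda>a. f a b :: real))"
  using assms by (simp add: fexp sum_distrib_left sum.swap[of _ "set_pmf A"] algebra_simps)

lemma finite_set_Pi_pmf:
  assumes "finite A" "\<And>x. x \<in> A \<Longrightarrow> finite (set_pmf (p x))"
  shows "finite (set_pmf (Pi_pmf A d p))"
  using assms by (simp add: set_Pi_pmf finite_PiE_dflt)

lemma hoeff_pmf:
  fixes X :: "'a \<Rightarrow> real"
  assumes fin: "finite (set_pmf M)" and l: "l > 0"
    and bnd: "\<And>x. x \<in> set_pmf M \<Longrightarrow> a \<le> X x \<and> X x \<le> b"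
    and E0: "measure_pmf.expectation M X = 0"
  shows "measure_pmf.expectation M (\<lambda>x. exp (l * X x)) \<le> exp (l\<^sup>2 * (b - a)\<^sup>2 / 8)"
proof -
  interpret interval_bounded_random_variable "measure_pmf M" X a b
    by unfold_locales (auto simp: AE_measure_pmf_iff bnd)
  have 1: "nn_integral M (\<lambda>x. exp (l * X x)) \<le> ennreal (exp (l\<^sup>2 * (b - a)\<^sup>2 / 8))"
    by (rule Hoeffdings_lemma_nn_integral_0[OF l E0])
  have 2: "nn_integral M (\<lambda>x. ennreal (exp (l * X x))) = ennreal (measure_pmf.expectation M (\<lambda>x. exp (l * X x)))"
    by (rule nn_integral_eq_integral) (auto intro: integrable_measure_pmf_finite[OF fin])
  from 1 2 show ?thesis by simp
qed

lemma mcd_mgf: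
  fixes p :: "'a \<Rightarrow> 'b pmf" and c :: "'a \<Rightarrow> real" and f :: "('a \<Rightarrow> 'b) \<Rightarrow> real"
  assumes "finite A" "\<And>x. x \<in> A \<Longrightarrow> finite (set_pmf (p x))" and l: "l > 0"
  shows "(\<forall>s\<in>set_pmf (Pi_pmf A d p). \<forall>s'\<in>set_pmf (Pi_pmf A d p). \<forall>x\<in>A.
            (\<forall>z. z \<noteq> x \<longrightarrow> s z = s' z) \<longrightarrow> f s - f s' \<le> c x) \<Longrightarrow>
     measure_pmf.expectation (Pi_pmf A d p)
        (\<lambda>s. exp (l * (f s - measure_pmf.expectation (Pi_pmf A d p) f)))
      \<le> exp (l\<^sup>2 * (\<Sum>x\<in>A. (c x)\<^sup>2) / 8)"
  using assms(1,2)
proof (induction A arbitrary: f rule: finite_induct)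
  case empty
  then show ?case by simp
next
  case (insert x A)
  define P where "P = Pi_pmf A d p"
  define Q where "Q = p x"
  have finP: "finite (set_pmf P)" unfolding P_def
    by (rule finite_set_Pi_pmf) (use insert in auto)
  have finQ: "finite (set_pmf Q)" unfolding Q_def using insert by auto
  have eqPi: "Pi_pmf (insert x A) d p = map_pmf (\<lambda>(y,g). g(x:=y)) (pair_pmf Q P)"
    unfolding P_def Q_def by (rule Pi_pmf_insert) (use insert in auto)
  have supp: "g(x:=y) \<in> set_pmf (Pi_pmf (insert x A) d p)" if "g \<in> set_pmf P" "y \<in> set_pmf Q" for g y
    unfolding eqPi using that by force
  have EF: "measure_pmf.expectation (Pi_pmf (insert x A) d p) F
      = measure_pmf.expectation P (\<lambda>g. measure_pmf.expectation Q (\<lambda>y. F (g(x:=y))))" for F :: "_ \<Rightarrow> real"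
    unfolding eqPi integral_map_pmf
    by (simp add: fexp_pair[OF finQ finP] fexp_swap[OF finQ finP] case_prod_beta)
  define h where "h g = measure_pmf.expectation Q (\<lambda>y. f (g(x:=y)))" for g
  have Ef: "measure_pmf.expectation (Pi_pmf (insert x A) d p) f = measure_pmf.expectation P h"
    unfolding EF h_def ..
  have bd_h: "\<forall>s\<in>set_pmf P. \<forall>s'\<in>set_pmf P. \<forall>z\<in>A.
            (\<forall>v. v \<noteq> z \<longrightarrow> s v = s' v) \<longrightarrow> h s - h s' \<le> c z"
  proof (intro ballI impI)
    fix g g' z assume g: "g \<in> set_pmf P" and g': "g' \<in> set_pmf P" and z: "z \<in> A"
      and eq: "\<forall>v. v \<noteq> z \<longrightarrow> g v = g' v"
    have "h g - h g' = measure_pmf.expectation Q (\<lambda>y. f (g(x:=y)) - f (g'(x:=y)))"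
      unfolding h_def by (simp add: fexp_diff[OF finQ])
    also have "\<dots> \<le> measure_pmf.expectation Q (\<lambda>_. c z)"
    proof (rule fexp_mono[OF finQ])
      fix y assume y: "y \<in> set_pmf Q"
      show "f (g(x:=y)) - f (g'(x:=y)) \<le> c z"
        using insert.prems(1) supp[OF g y] supp[OF g' y] z eq by auto
    qed
    finally show "h g - h g' \<le> c z" by simp
  qed
  have IH: "measure_pmf.expectation P (\<lambda>g. exp (l * (h g - measure_pmf.expectation P h)))
      \<le> exp (l\<^sup>2 * (\<Sum>x\<in>A. (c x)\<^sup>2) / 8)"
    unfolding P_def by (rule insert.IH) (use bd_h insert.prems in \<open>auto simp: P_def\<close>)
  have inner: "measure_pmf.expectation Q (\<lambda>y. exp (l * (f (g(x:=y)) - h g))) \<le> exp (l\<^sup>2 * (c x)\<^sup>2 / 8)"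
    if g: "g \<in> set_pmf P" for g
  proof -
    define V where "V = (\<lambda>y. f (g(x:=y))) ` set_pmf Q"
    have "finite V" "V \<noteq> {}" unfolding V_def using finQ by (auto simp: set_pmf_not_empty)
    then have "Min V \<in> V" by (rule Min_in)
    then obtain y0 where y0: "y0 \<in> set_pmf Q" "f (g(x:=y0)) = Min V" unfolding V_def by auto
    have bnd: "Min V \<le> f (g(x:=y)) \<and> f (g(x:=y)) \<le> Min V + c x" if y: "y \<in> set_pmf Q" for y
    proof
      show "Min V \<le> f (g(x:=y))" using \<open>finite V\<close> y unfolding V_def by (auto intro: Min_le)
      have "f (g(x:=y)) - f (g(x:=y0)) \<le> c x"
        using insert.prems(1) supp[OF g y] supp[OF g y0(1)] by auto
      then show "f (g(x:=y)) \<le> Min V + c x" using y0 by simp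
    qed
    have cx: "c x \<ge> 0" using bnd[OF y0(1)] by simp
    have E0: "measure_pmf.expectation Q (\<lambda>y. f (g(x:=y)) - h g) = 0"
      unfolding h_def by (simp add: fexp_diff[OF finQ])
    have "measure_pmf.expectation Q (\<lambda>y. exp (l * (f (g(x:=y)) - h g)))
        \<le> exp (l\<^sup>2 * ((Min V + c x - h g) - (Min V - h g))\<^sup>2 / 8)"
      by (rule hoeff_pmf[OF finQ l _ E0]) (use bnd in auto)
    then show ?thesis by simp
  qed
  have "measure_pmf.expectation (Pi_pmf (insert x A) d p)
        (\<lambda>s. exp (l * (f s - measure_pmf.expectation (Pi_pmf (insert x A) d p) f)))
      = measure_pmf.expectation P (\<lambda>g. measure_pmf.expectation Q
           (\<lambda>y. exp (l * (h g - measure_pmf.expectation P h)) * exp (l * (f (g(x:=y)) - h g))))"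
    unfolding EF h_def by (simp add: mult_exp_exp algebra_simps)
  also have "\<dots> = measure_pmf.expectation P (\<lambda>g. exp (l * (h g - measure_pmf.expectation P h)) *
           measure_pmf.expectation Q (\<lambda>y. exp (l * (f (g(x:=y)) - h g))))"
    by (simp add: fexp_cmult[OF finQ])
  also have "\<dots> \<le> measure_pmf.expectation P (\<lambda>g. exp (l * (h g - measure_pmf.expectation P h)) *
           exp (l\<^sup>2 * (c x)\<^sup>2 / 8))"
    by (rule fexp_mono[OF finP]) (intro mult_left_mono inner, auto)
  also have "\<dots> = exp (l\<^sup>2 * (c x)\<^sup>2 / 8) *
      measure_pmf.expectation P (\<lambda>g. exp (l * (h g - measure_pmf.expectation P h)))"
    by (simp add: fexp_cmult[OF finP] mult.commute)
  also have "\<dots> \<le> exp (l\<^sup>2 * (c x)\<^sup>2 / 8) * exp (l\<^sup>2 * (\<Sum>x\<in>A. (c x)\<^sup>2) / 8)"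
    by (rule mult_left_mono[OF IH]) simp
  also have "\<dots> = exp (l\<^sup>2 * (\<Sum>x\<in>insert x A. (c x)\<^sup>2) / 8)"
    using insert by (simp add: mult_exp_exp add_divide_distrib distrib_left)
  finally show ?case .
qed

lemma mcd_tail:
  fixes p :: "'a \<Rightarrow> 'b pmf" and c :: "'a \<Rightarrow> real" and f :: "('a \<Rightarrow> 'b) \<Rightarrow> real"
  assumes "finite A" "\<And>x. x \<in> A \<Longrightarrow> finite (set_pmf (p x))"
    and bd: "\<forall>s\<in>set_pmf (Pi_pmf A d p). \<forall>s'\<in>set_pmf (Pi_pmf A d p). \<forall>x\<in>A.
            (\<forall>z. z \<noteq> x \<longrightarrow> s z = s' z) \<longrightarrow> f s - f s' \<le> c x"
    and t: "t > 0" and C: "(\<Sum>x\<in>A. (c x)\<^sup>2) > 0"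
  shows "measure_pmf.prob (Pi_pmf A d p)
           {s. f s - measure_pmf.expectation (Pi_pmf A d p) f \<ge> t}
         \<le> exp (- 2 * t\<^sup>2 / (\<Sum>x\<in>A. (c x)\<^sup>2))"
proof -
  define M where "M = Pi_pmf A d p"
  define C where "C = (\<Sum>x\<in>A. (c x)\<^sup>2)"
  define l where "l = 4 * t / C"
  have Cp: "C > 0" using C unfolding C_def .
  have l: "l > 0" unfolding l_def using t Cp by simp
  have finM: "finite (set_pmf M)" unfolding M_def by (rule finite_set_Pi_pmf) (use assms in auto)
  let ?g = "\<lambda>s. f s - measure_pmf.expectation M f"
  have "measure_pmf.prob M {s\<in>UNIV. ?g s \<ge> t}
     \<le> exp (- l * t) * (\<integral>x\<in>UNIV. exp (l * ?g x) \<partial>M)"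
    by (rule measure_pmf.Chernoff_ineq_ge[OF l])
       (auto intro: integrable_measure_pmf_finite[OF finM] simp: set_integrable_def)
  also have "(\<integral>x\<in>UNIV. exp (l * ?g x) \<partial>M) = measure_pmf.expectation M (\<lambda>x. exp (l * ?g x))"
    by (simp add: set_lebesgue_integral_def)
  also have "\<dots> \<le> exp (l\<^sup>2 * C / 8)"
    unfolding M_def C_def by (rule mcd_mgf[OF assms(1,2) l bd])
  finally have "measure_pmf.prob M {s. ?g s \<ge> t} \<le> exp (- l * t) * exp (l\<^sup>2 * C / 8)"
    by (simp add: mult_left_mono)
  also have "exp (- l * t) * exp (l\<^sup>2 * C / 8) = exp (- 2 * t\<^sup>2 / C)"
    unfolding mult_exp_exp l_def using Cp by (simp add: field_simps power2_eq_square)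
  finally show ?thesis unfolding M_def C_def .
qed



lemma card_le1_cases:
  assumes "finite S" "card S \<le> 1"
  shows "S = {} \<or> (\<exists>a. S = {a})"
proof (cases "card S = 0")
  case True then have "S = {}" using assms(1) card_0_eq by blast
  then show ?thesis by simp
next
  case False then have "card S = 1" using assms(2) by linarith
  then show ?thesis by (auto simp: card_1_singleton_iff)
qed

lemma pair_card:
  fixes U V N :: "'a set"
  assumes N: "finite N" "N \<noteq> {}" and sub: "U \<subseteq> N" "V \<subseteq> N"
    and c1: "card (V - U) \<le> 1" and c2: "card (U - V) \<le> 1"
  shows "card (V \<times> (N - V) - U \<times> (N - U)) + 1 \<le> card N"
proof -
  have fOO: "finite V" "finite U" using sub N finite_subset by auto
  have cN: "card N \<ge> 1" using N by (simp add: Suc_leI card_gt_0_iff)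
  have cV: "card V \<le> card N" using sub N by (simp add: card_mono)
  have cdiff: "card (N - V) = card N - card V" using sub fOO by (simp add: card_Diff_subset)
  let ?X = "V \<times> (N - V) - U \<times> (N - U)"
  have fX: "finite ?X" using N fOO by auto
  have d1: "V - U = {} \<or> (\<exists>a. V - U = {a})" by (rule card_le1_cases) (use fOO c1 in auto)
  have d2: "U - V = {} \<or> (\<exists>a. U - V = {a})" by (rule card_le1_cases) (use fOO c2 in auto)
  consider "V - U = {}" "U - V = {}" | b where "V - U = {}" "U - V = {b}"
    | a where "V - U = {a}" "U - V = {}" | a b where "V - U = {a}" "U - V = {b}"
    using d1 d2 by (elim disjE exE) metis+
  then show ?thesis
  proof cases
    case 1
    then have e: "?X = {}" by blast
    show ?thesis unfolding e using cN by simp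
  next
    case (2 b)
    have "?X \<subseteq> V \<times> {b}" using 2 by blast
    then have "card ?X \<le> card (V \<times> {b})" using fOO by (intro card_mono) auto
    also have "\<dots> = card V" by (simp add: card_cartesian_product)
    also have "V \<subseteq> N - {b}" using 2 sub by blast
    then have "card V \<le> card (N - {b})" using N by (intro card_mono) auto
    moreover have "card (N - {b}) = card N - 1" using 2 sub by auto
    ultimately show ?thesis using cN by linarith
  next
    case (3 a)
    have "?X \<subseteq> {a} \<times> (N - V)" using 3 by blast
    then have "card ?X \<le> card ({a} \<times> (N - V))" using N by (intro card_mono) auto
    also have "\<dots> = card (N - V)" by (simp add: card_cartesian_product)
    finally have "card ?X \<le> card N - card V" using cdiff by simp
    moreover have "a \<in> V" using 3 by blast
    then have "card V \<ge> 1" using fOO by (metis One_nat_def Suc_leI card_gt_0_iff empty_iff)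
    ultimately show ?thesis using cV by linarith
  next
    case (4 a b)
    have aV: "a \<in> V" using 4 by blast
    have sub4: "?X \<subseteq> {a} \<times> (N - V) \<union> (V - {a}) \<times> {b}"
    proof
      fix z assume z: "z \<in> ?X"
      obtain r q where zq: "z = (r,q)" by (cases z)
      from z have r: "r \<in> V" "q \<in> N - V" "\<not> (r \<in> U \<and> q \<in> N - U)" by (auto simp: zq)
      show "z \<in> {a} \<times> (N - V) \<union> (V - {a}) \<times> {b}"
      proof (cases "r = a")
        case True then show ?thesis using r zq by simp
      next
        case False
        have "r \<notin> V - U" using False 4(1) by simp
        then have "r \<in> U" using r(1) by simp
        then have "q \<in> U - V" using r by simp
        then have "q = b" using 4(2) by simp
        then show ?thesis using False r zq by simp
      qed
    qed
    have fin4: "finite ({a} \<times> (N - V) \<union> (V - {a}) \<times> {b})" using N fOO by simp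
    have "card ?X \<le> card ({a} \<times> (N - V) \<union> (V - {a}) \<times> {b})"
      by (rule card_mono[OF fin4 sub4])
    also have "\<dots> \<le> card ({a} \<times> (N - V)) + card ((V - {a}) \<times> {b})" by (rule card_Un_le)
    also have "\<dots> = card (N - V) + card (V - {a})" by (simp add: card_cartesian_product)
    also have "card (V - {a}) = card V - 1" using aV by (simp add: card_Diff_singleton)
    finally have "card ?X \<le> card N - card V + (card V - 1)" using cdiff by simp
    moreover have "a \<in> V" using 4 by blast
    then have "card V \<ge> 1" using fOO by (metis One_nat_def Suc_leI card_gt_0_iff empty_iff)
    ultimately show ?thesis using cV by linarith
  qed
qed

lemma pair_diff:
  fixes F :: "'a \<Rightarrow> 'a \<Rightarrow> real" and U V N :: "'a set"
  assumes N: "finite N" "N \<noteq> {}" and sub: "U \<subseteq> N" "V \<subseteq> N"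
    and c1: "card (V - U) \<le> 1" and c2: "card (U - V) \<le> 1"
    and F: "\<And>a b. 0 \<le> F a b \<and> F a b \<le> 1"
  shows "(\<Sum>p\<in>V. \<Sum>q\<in>N - V. F p q) - (\<Sum>p\<in>U. \<Sum>q\<in>N - U. F p q) \<le> real (card N) - 1"
proof -
  have fOO: "finite V" "finite U" using sub N finite_subset by auto
  let ?X' = "V \<times> (N - V)" and ?X = "U \<times> (N - U)"
  let ?G = "\<lambda>z. F (fst z) (snd z)"
  have fX: "finite ?X'" "finite ?X" using fOO N by auto
  have e1: "(\<Sum>p\<in>V. \<Sum>q\<in>N - V. F p q) = sum ?G ?X'"
    by (simp add: sum.cartesian_product case_prod_beta)
  have e2: "(\<Sum>p\<in>U. \<Sum>q\<in>N - U. F p q) = sum ?G ?X"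
    by (simp add: sum.cartesian_product case_prod_beta)
  have s0: "sum ?G ?X' = sum ?G (?X' - ?X' \<inter> ?X) + sum ?G (?X' \<inter> ?X)"
    by (rule sum.subset_diff) (use fX in auto)
  have s0': "?X' - ?X' \<inter> ?X = ?X' - ?X" by blast
  have s1: "sum ?G ?X' = sum ?G (?X' - ?X) + sum ?G (?X' \<inter> ?X)"
    using s0 s0' by simp
  have Fn: "\<And>z. 0 \<le> ?G z" using F by blast
  have s2: "sum ?G (?X' \<inter> ?X) \<le> sum ?G ?X"
    by (rule sum_mono2[OF fX(2)]) (auto simp: Fn)
  have Fl: "\<And>z. ?G z \<le> 1" using F by blast
  have s3': "sum ?G (?X' - ?X) \<le> sum (\<lambda>_. 1) (?X' - ?X)"
    by (rule sum_mono) (rule Fl)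
  have s3: "sum ?G (?X' - ?X) \<le> real (card (?X' - ?X))"
    using s3' by simp
  have s4: "card (?X' - ?X) + 1 \<le> card N" by (rule pair_card[OF assms(1-6)])
  then have "real (card (?X' - ?X)) \<le> real (card N) - 1" by linarith
  then show ?thesis unfolding e1 e2 using s1 s2 s3 by linarith
qed



lemma swap_pair_Pi:
  fixes S :: "'a \<Rightarrow> bool"
  assumes "finite A"
  shows "map_pmf (\<lambda>(a,b). (\<lambda>x. if S x then a x else b x, \<lambda>x. if S x then b x else a x))
            (pair_pmf (Pi_pmf A d p) (Pi_pmf A d p)) = pair_pmf (Pi_pmf A d p) (Pi_pmf A d p)"
    (is "map_pmf ?T ?M = ?M")
proof (rule pmf_eqI)
  fix z :: "('a \<Rightarrow> 'b) \<times> ('a \<Rightarrow> 'b)"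
  have inv: "?T (?T z) = z" for z by (cases z) (auto simp: fun_eq_iff)
  have inj: "inj ?T" by (metis (no_types, lifting) inv injI)
  have "pmf (map_pmf ?T ?M) z = pmf (map_pmf ?T ?M) (?T (?T z))" by (simp only: inv)
  also have "\<dots> = pmf ?M (?T z)" by (rule pmf_map_inj'[OF inj])
  also have "\<dots> = pmf ?M z"
  proof -
    obtain a b where z: "z = (a, b)" by (cases z)
    let ?a = "\<lambda>x. if S x then a x else b x" and ?b = "\<lambda>x. if S x then b x else a x"
    have "pmf (Pi_pmf A d p) ?a * pmf (Pi_pmf A d p) ?b = pmf (Pi_pmf A d p) a * pmf (Pi_pmf A d p) b"
    proof (cases "(\<forall>x. x \<notin> A \<longrightarrow> a x = d) \<and> (\<forall>x. x \<notin> A \<longrightarrow> b x = d)")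
      case True
      then have "(\<forall>x. x \<notin> A \<longrightarrow> ?a x = d) \<and> (\<forall>x. x \<notin> A \<longrightarrow> ?b x = d)" by auto
      then have "pmf (Pi_pmf A d p) ?a * pmf (Pi_pmf A d p) ?b
           = (\<Prod>x\<in>A. pmf (p x) (?a x)) * (\<Prod>x\<in>A. pmf (p x) (?b x))"
        using assms by (simp add: pmf_Pi)
      also have "\<dots> = (\<Prod>x\<in>A. pmf (p x) (?a x) * pmf (p x) (?b x))" by (simp add: prod.distrib)
      also have "\<dots> = (\<Prod>x\<in>A. pmf (p x) (a x) * pmf (p x) (b x))"
        by (intro prod.cong) auto
      also have "\<dots> = (\<Prod>x\<in>A. pmf (p x) (a x)) * (\<Prod>x\<in>A. pmf (p x) (b x))" by (simp add: prod.distrib)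
      also have "\<dots> = pmf (Pi_pmf A d p) a * pmf (Pi_pmf A d p) b"
        using assms True by (simp add: pmf_Pi)
      finally show ?thesis .
    next
      case False
      then obtain x where x: "x \<notin> A" "a x \<noteq> d \<or> b x \<noteq> d" by auto
      then have "?a x \<noteq> d \<or> ?b x \<noteq> d" by auto
      then have "pmf (Pi_pmf A d p) ?a = 0 \<or> pmf (Pi_pmf A d p) ?b = 0"
      proof
        assume "?a x \<noteq> d" then show ?thesis
          by (intro disjI1 pmf_Pi_outside assms) (use x(1) in blast)
      next
        assume "?b x \<noteq> d" then show ?thesis
          by (intro disjI2 pmf_Pi_outside assms) (use x(1) in blast)
      qed
      then have "pmf (Pi_pmf A d p) ?a * pmf (Pi_pmf A d p) ?b = 0" by auto
      have "pmf (Pi_pmf A d p) a = 0 \<or> pmf (Pi_pmf A d p) b = 0"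
        using x(2)
      proof
        assume "a x \<noteq> d" then show ?thesis
          by (intro disjI1 pmf_Pi_outside assms) (use x(1) in blast)
      next
        assume "b x \<noteq> d" then show ?thesis
          by (intro disjI2 pmf_Pi_outside assms) (use x(1) in blast)
      qed
      then have "pmf (Pi_pmf A d p) a * pmf (Pi_pmf A d p) b = 0" by auto
      moreover note \<open>pmf (Pi_pmf A d p) ?a * pmf (Pi_pmf A d p) ?b = 0\<close>
      ultimately show ?thesis by linarith
    qed
    then show ?thesis unfolding z by (simp add: pmf_pair)
  qed
  finally show "pmf (map_pmf ?T ?M) z = pmf ?M z" .
qed

lemma rad_neg:
  "map_pmf (\<lambda>\<nu> i. - \<nu> i) (rademacher_dist m) = rademacher_dist m"
proof -
  have "map_pmf uminus (pmf_of_set {-1, 1::real}) = pmf_of_set (uminus ` {-1,1})"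
    by (rule map_pmf_of_set_inj) auto
  also have "uminus ` {-1, 1::real} = {-1,1}" by auto
  finally have e: "map_pmf uminus (pmf_of_set {-1, 1::real}) = pmf_of_set {-1,1}" .
  have "rademacher_dist m = Pi_pmf {..<m} 0 (\<lambda>_. map_pmf uminus (pmf_of_set {-1, 1::real}))"
    unfolding rademacher_dist_def e ..
  also have "\<dots> = map_pmf (\<lambda>h. uminus \<circ> h) (Pi_pmf {..<m} 0 (\<lambda>_. pmf_of_set {-1, 1::real}))"
    by (rule Pi_pmf_map) auto
  finally show ?thesis unfolding rademacher_dist_def by (simp add: comp_def)
qed

lemma omega_eq: "omega s ns i = (\<lambda>k. s (i,k)) ` {..<ns i}"
  by (auto simp: omega_def)

lemma ut_cong:
  assumes "\<And>k. k < ns i \<Longrightarrow> s (i,k) = s' (i,k)"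
  shows "user_term w y n ns Q s i = user_term w y n ns Q s' i"
proof -
  have "omega s ns i = omega s' ns i" using assms by (auto simp: omega_eq)
  then show ?thesis unfolding user_term_def omegabar_def by simp
qed

lemma ut_bnd:
  assumes "1 \<le> ns i" "ns i < n" "\<And>a b c. 0 \<le> Q a b c \<and> Q a b c \<le> 1"
  shows "0 \<le> user_term w y n ns Q s i \<and> user_term w y n ns Q s i \<le> real n"
proof -
  let ?O = "omega s ns i" and ?Ob = "omegabar n s ns i"
  let ?S = "\<Sum>p\<in>?O. \<Sum>q\<in>?Ob. Q (w i) (y p) (y q)"
  have fO: "finite ?O" by (simp add: omega_eq)
  have fOb: "finite ?Ob" by (simp add: omegabar_def)
  have S0: "?S \<ge> 0" using assms(3) by (intro sum_nonneg) auto
  have "?S \<le> (\<Sum>p\<in>?O. \<Sum>q\<in>?Ob. 1)" using assms(3) by (intro sum_mono) auto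
  also have "\<dots> = real (card ?O) * real (card ?Ob)" by simp
  also have "\<dots> \<le> real (ns i) * real n"
  proof (intro mult_mono)
    show "real (card ?O) \<le> real (ns i)" unfolding omega_eq
      using card_image_le[of "{..<ns i}" "\<lambda>k. s (i,k)"] by simp
    have "card ?Ob \<le> card {..<n}" unfolding omegabar_def by (intro card_mono) auto
    then show "real (card ?Ob) \<le> real n" by simp
  qed auto
  finally have S1: "?S \<le> real (ns i) * real n" .
  have p1: "real (ns i) > 0" using assms by simp
  have p2: "real (n - ns i) \<ge> 1" using assms by simp
  have "user_term w y n ns Q s i = ?S / (real (ns i) * real (n - ns i))"
    unfolding user_term_def by simp
  also have "\<dots> \<le> (real (ns i) * real n) / (real (ns i) * real (n - ns i))"
    using S1 p1 p2 by (intro divide_right_mono) auto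
  also have "\<dots> = real n / real (n - ns i)" using p1 by simp
  also have "\<dots> \<le> real n / 1" using p2 by (intro divide_left_mono) auto
  finally show ?thesis using S0 p1 p2 unfolding user_term_def by simp
qed

lemma ut_diff:
  assumes "1 \<le> ns i" "ns i < n" "\<And>a b c. 0 \<le> Q a b c \<and> Q a b c \<le> 1"
    and rs: "\<And>k. k < ns i \<Longrightarrow> s (i,k) < n" and rs': "\<And>k. k < ns i \<Longrightarrow> s' (i,k) < n"
    and kk: "kk < ns i" and eq: "\<And>k. k < ns i \<Longrightarrow> k \<noteq> kk \<Longrightarrow> s (i,k) = s' (i,k)"
  shows "user_term w y n ns Q s' i - user_term w y n ns Q s i \<le> (real n - 1) / (real (ns i) * real (n - ns i))"
proof -
  let ?U = "omega s ns i" and ?V = "omega s' ns i"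
  let ?F = "\<lambda>p q. Q (w i) (y p) (y q)"
  have sU: "?U \<subseteq> {..<n}" using rs by (auto simp: omega_eq)
  have sV: "?V \<subseteq> {..<n}" using rs' by (auto simp: omega_eq)
  have "?V - ?U \<subseteq> {s' (i,kk)}" using eq by (auto simp: omega_eq) (metis imageI lessThan_iff)
  then have c1: "card (?V - ?U) \<le> 1" using card_mono[of "{s' (i,kk)}"] by fastforce
  have "?U - ?V \<subseteq> {s (i,kk)}" using eq by (auto simp: omega_eq)
  then have c2: "card (?U - ?V) \<le> 1" using card_mono[of "{s (i,kk)}"] by fastforce
  have N: "finite {..<n}" "{..<n} \<noteq> {}" using assms by auto
  have pd: "(\<Sum>p\<in>?V. \<Sum>q\<in>{..<n} - ?V. ?F p q) - (\<Sum>p\<in>?U. \<Sum>q\<in>{..<n} - ?U. ?F p q)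
      \<le> real (card {..<n}) - 1"
    by (rule pair_diff[OF N sU sV c1 c2]) (use assms(3) in auto)
  have p1: "real (ns i) * real (n - ns i) > 0" using assms by simp
  have "user_term w y n ns Q s' i - user_term w y n ns Q s i =
     ((\<Sum>p\<in>?V. \<Sum>q\<in>{..<n} - ?V. ?F p q) - (\<Sum>p\<in>?U. \<Sum>q\<in>{..<n} - ?U. ?F p q))
       / (real (ns i) * real (n - ns i))"
    unfolding user_term_def omegabar_def by (simp add: diff_divide_distrib)
  also have "\<dots> \<le> (real n - 1) / (real (ns i) * real (n - ns i))"
    using pd p1 by (intro divide_right_mono) auto
  finally show ?thesis .
qed



theorem mainTheorem7:
  fixes m n :: nat
    and w :: "nat \<Rightarrow> 'w" and y :: "nat \<Rightarrow> 'y"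
    and ns :: "nat \<Rightarrow> nat"
    and D :: "nat \<Rightarrow> nat pmf"
    and QQ :: "('w \<Rightarrow> 'y \<Rightarrow> 'y \<Rightarrow> real) set"
    and \<delta> :: real
  assumes "m \<ge> 1"
    and "\<And>i. i < m \<Longrightarrow> 1 \<le> ns i \<and> ns i < n"
    and "\<And>i. i < m \<Longrightarrow> set_pmf (D i) \<subseteq> {..<n}"
    and "\<And>Q a b c. Q \<in> QQ \<Longrightarrow> 0 \<le> Q a b c \<and> Q a b c \<le> 1"
    and "0 < \<delta>" and "\<delta> < 1"
  shows "measure_pmf.prob (sample_dist m ns D)
           {s. \<forall>Q\<in>QQ. true_risk m w y n ns D Q
                 \<le> emp_risk m w y n ns Q s + rad_auc m w y n ns D QQ
                   + sqrt (ln (1 / \<delta>) * (real n - 1)^2 / (2 * real m ^ 2)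
                       * (\<Sum>i<m. 1 / (real (ns i) * real (n - ns i) ^ 2)))}
         \<ge> 1 - \<delta>"
proof (cases "QQ = {}")
  case True
  then show ?thesis using assms(5) by simp
next
  case QQne: False
  note m1 = assms(1) and nsb = assms(2) and Dn = assms(3) and Qb = assms(4)
  define P where "P = sample_dist m ns D"
  define I where "I = {(i,k). i < m \<and> k < ns i}"
  define pp :: "nat \<times> nat \<Rightarrow> nat pmf" where "pp = (\<lambda>(i,k). D i)"
  have PI: "P = Pi_pmf I 0 pp" by (simp add: P_def sample_dist_def I_def pp_def)
  have IS: "I = Sigma {..<m} (\<lambda>i. {..<ns i})" by (auto simp: I_def)
  have finI: "finite I" unfolding IS by simp
  have finpp: "finite (set_pmf (pp x))" if "x \<in> I" for x
    using that Dn by (auto simp: I_def pp_def intro: finite_subset[of _ "{..<n}"])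
  have finP: "finite (set_pmf P)" unfolding PI by (rule finite_set_Pi_pmf[OF finI finpp])
  have suppP: "s (i,k) < n" if "s \<in> set_pmf P" "i < m" "k < ns i" for s i k
  proof -
    have "s \<in> PiE_dflt I 0 (set_pmf \<circ> pp)" using that(1) unfolding PI by (simp add: set_Pi_pmf[OF finI])
    then have "s (i,k) \<in> set_pmf (D i)" using that by (auto simp: PiE_dflt_def I_def pp_def)
    then show ?thesis using Dn that(2) by auto
  qed
  define R where "R = rademacher_dist m"
  have finR: "finite (set_pmf R)" unfolding R_def rademacher_dist_def
    by (rule finite_set_Pi_pmf) auto
  have suppR: "\<nu> i = -1 \<or> \<nu> i = 1" if "\<nu> \<in> set_pmf R" "i < m" for \<nu> i
  proof -
    have "\<nu> \<in> PiE_dflt {..<m} 0 (set_pmf \<circ> (\<lambda>_. pmf_of_set {-1, 1::real}))"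
      using that(1) unfolding R_def rademacher_dist_def by (simp add: set_Pi_pmf)
    then show ?thesis using that(2) by (auto simp: PiE_dflt_def)
  qed
  have finPP: "finite (set_pmf (pair_pmf P P))" using finP by simp

  define u where "u Q s i = user_term w y n ns Q s i" for Q s i
  define e where "e Q s = emp_risk m w y n ns Q s" for Q s
  have e_eq: "e Q s = (1 / real m) * (\<Sum>i<m. u Q s i)" for Q s
    by (simp add: e_def u_def emp_risk_def)
  define tr where "tr Q = true_risk m w y n ns D Q" for Q
  have tr_eq: "tr Q = measure_pmf.expectation P (e Q)" for Q
    unfolding tr_def true_risk_def P_def e_def[abs_def] ..
  have ub: "0 \<le> u Q s i \<and> u Q s i \<le> real n" if "Q \<in> QQ" "i < m" for Q s i
    unfolding u_def using nsb[OF that(2)] Qb[OF that(1)] by (intro ut_bnd) auto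
  have eb: "0 \<le> e Q s \<and> e Q s \<le> real n" if "Q \<in> QQ" for Q s
  proof -
    have "0 \<le> (\<Sum>i<m. u Q s i)" using ub[OF that] by (intro sum_nonneg) auto
    moreover have "(\<Sum>i<m. u Q s i) \<le> (\<Sum>i<m. real n)" using ub[OF that] by (intro sum_mono) auto
    ultimately show ?thesis using m1 unfolding e_eq by (auto simp: field_simps)
  qed
  have trb: "0 \<le> tr Q \<and> tr Q \<le> real n" if "Q \<in> QQ" for Q
  proof -
    have "measure_pmf.expectation P (\<lambda>_. 0) \<le> measure_pmf.expectation P (e Q)"
      using eb[OF that] by (intro fexp_mono[OF finP]) auto
    moreover have "measure_pmf.expectation P (e Q) \<le> measure_pmf.expectation P (\<lambda>_. real n)"
      using eb[OF that] by (intro fexp_mono[OF finP]) auto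
    ultimately show ?thesis unfolding tr_eq by simp
  qed

  define \<Phi> where "\<Phi> s = (SUP Q\<in>QQ. tr Q - e Q s)" for s
  have bdd\<Phi>: "bdd_above ((\<lambda>Q. tr Q - e Q s) ` QQ)" for s
  proof (rule bdd_aboveI2[where M = "real n"])
    fix Q assume "Q \<in> QQ"
    then show "tr Q - e Q s \<le> real n" using trb[of Q] eb[of Q s] by linarith
  qed
  have \<Phi>_ge: "tr Q - e Q s \<le> \<Phi> s" if "Q \<in> QQ" for Q s
    unfolding \<Phi>_def by (rule cSUP_upper[OF that bdd\<Phi>])

  define c where "c x = (real n - 1) / (real m * real (ns (fst x)) * real (n - ns (fst x)))" for x :: "nat \<times> nat"
  have bd: "\<forall>s\<in>set_pmf (Pi_pmf I 0 pp). \<forall>s'\<in>set_pmf (Pi_pmf I 0 pp). \<forall>x\<in>I.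
            (\<forall>z. z \<noteq> x \<longrightarrow> s z = s' z) \<longrightarrow> \<Phi> s - \<Phi> s' \<le> c x"
  proof (intro ballI impI)
    fix s s' x assume s: "s \<in> set_pmf (Pi_pmf I 0 pp)" and s': "s' \<in> set_pmf (Pi_pmf I 0 pp)"
      and x: "x \<in> I" and eq: "\<forall>z. z \<noteq> x \<longrightarrow> s z = s' z"
    obtain i k0 where xi: "x = (i, k0)" and i: "i < m" and k0: "k0 < ns i" using x by (auto simp: I_def)
    have ediff: "e Q s' - e Q s \<le> c x" if Q: "Q \<in> QQ" for Q
    proof -
      have "(\<Sum>j<m. u Q s' j) - (\<Sum>j<m. u Q s j) = (\<Sum>j<m. u Q s' j - u Q s j)"
        by (simp add: sum_subtractf)
      also have "\<dots> = (\<Sum>j\<in>{i}. u Q s' j - u Q s j)"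
      proof (rule sum.mono_neutral_right)
        show "\<forall>j\<in>{..<m} - {i}. u Q s' j - u Q s j = 0"
        proof
          fix j assume "j \<in> {..<m} - {i}"
          then have "j \<noteq> i" by auto
          then have "u Q s j = u Q s' j" unfolding u_def
            by (intro ut_cong) (use eq xi in auto)
          then show "u Q s' j - u Q s j = 0" by simp
        qed
      qed (use i in auto)
      also have "\<dots> = u Q s' i - u Q s i" by simp
      also have "\<dots> \<le> (real n - 1) / (real (ns i) * real (n - ns i))"
        unfolding u_def
      proof (rule ut_diff[where kk=k0])
        show "1 \<le> ns i" "ns i < n" using nsb[OF i] by auto
        show "\<And>a b c. 0 \<le> Q a b c \<and> Q a b c \<le> 1" using Qb[OF Q] .
        show "\<And>k. k < ns i \<Longrightarrow> s (i, k) < n" using suppP s i unfolding PI by auto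
        show "\<And>k. k < ns i \<Longrightarrow> s' (i, k) < n" using suppP s' i unfolding PI by auto
        show "\<And>k. k < ns i \<Longrightarrow> k \<noteq> k0 \<Longrightarrow> s (i, k) = s' (i, k)" using eq xi by auto
        show "k0 < ns i" by (rule k0)
      qed
      finally have "(\<Sum>j<m. u Q s' j) - (\<Sum>j<m. u Q s j) \<le> (real n - 1) / (real (ns i) * real (n - ns i))" .
      then have "(1 / real m) * ((\<Sum>j<m. u Q s' j) - (\<Sum>j<m. u Q s j))
          \<le> (1 / real m) * ((real n - 1) / (real (ns i) * real (n - ns i)))"
        by (intro mult_left_mono) auto
      moreover have "e Q s' - e Q s = (1 / real m) * ((\<Sum>j<m. u Q s' j) - (\<Sum>j<m. u Q s j))"
        unfolding e_eq by (simp add: right_diff_distrib)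
      moreover have "c x = (1 / real m) * ((real n - 1) / (real (ns i) * real (n - ns i)))"
        unfolding c_def xi by simp
      ultimately show ?thesis by metis
    qed
    have "\<Phi> s \<le> \<Phi> s' + c x"
      unfolding \<Phi>_def[of s]
    proof (rule cSUP_least[OF QQne])
      fix Q assume Q: "Q \<in> QQ"
      have "tr Q - e Q s = (tr Q - e Q s') + (e Q s' - e Q s)" by simp
      also have "\<dots> \<le> \<Phi> s' + c x" using \<Phi>_ge[OF Q, of s'] ediff[OF Q] by linarith
      finally show "tr Q - e Q s \<le> \<Phi> s' + c x" .
    qed
    then show "\<Phi> s - \<Phi> s' \<le> c x" by simp
  qed

  define SS where "SS = (\<Sum>i<m. 1 / (real (ns i) * real (n - ns i) ^ 2))"
  have Csum: "(\<Sum>x\<in>I. (c x)\<^sup>2) = (real n - 1)^2 / real m ^ 2 * SS"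
  proof -
    have "(\<Sum>x\<in>I. (c x)\<^sup>2) = (\<Sum>i<m. \<Sum>k<ns i. (c (i,k))\<^sup>2)"
      unfolding IS by (simp add: sum.Sigma)
    also have "\<dots> = (\<Sum>i<m. (real n - 1)^2 / real m ^ 2 * (1 / (real (ns i) * real (n - ns i) ^ 2)))"
    proof (rule sum.cong[OF refl])
      fix i assume "i \<in> {..<m}"
      then have p: "real (ns i) > 0" "real (n - ns i) > 0" using nsb[of i] by auto
      define a where "a = real (ns i)"
      define b where "b = real (n - ns i)"
      have ab: "a > 0" "b > 0" "real m > 0" using p m1 unfolding a_def b_def by auto
      have "(\<Sum>k<ns i. (c (i,k))\<^sup>2) = a * ((real n - 1) / (real m * a * b))\<^sup>2"
        unfolding c_def a_def b_def by simp
      also have "\<dots> = (real n - 1)^2 / real m ^ 2 * (1 / (a * b ^ 2))"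
        using ab by (simp add: power2_eq_square field_simps)
      finally show "(\<Sum>k<ns i. (c (i,k))\<^sup>2) = (real n - 1)^2 / real m ^ 2 * (1 / (real (ns i) * real (n - ns i) ^ 2))"
        unfolding a_def b_def .
    qed
    also have "\<dots> = (real n - 1)^2 / real m ^ 2 * SS" unfolding SS_def by (simp add: sum_distrib_left)
    finally show ?thesis .
  qed
  have n2: "real n - 1 > 0" using nsb[of 0] m1 by auto
  have SSp: "SS > 0" unfolding SS_def
  proof (rule sum_pos)
    fix i assume "i \<in> {..<m}"
    then show "0 < 1 / (real (ns i) * real (n - ns i) ^ 2)" using nsb[of i] by auto
  qed (use m1 in \<open>auto simp: lessThan_empty_iff\<close>)
  define C where "C = (\<Sum>x\<in>I. (c x)\<^sup>2)"
  have Cp: "C > 0" unfolding C_def Csum using n2 SSp m1 by simp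
  have lnp: "ln (1 / \<delta>) > 0" using assms(5,6) by simp
  define t where "t = sqrt (ln (1 / \<delta>) * (real n - 1)^2 / (2 * real m ^ 2) * SS)"
  have t2: "t\<^sup>2 = ln (1 / \<delta>) * C / 2"
    unfolding t_def C_def Csum using lnp n2 SSp by (simp add: field_simps)
  have tp: "t > 0" unfolding t_def using lnp n2 SSp m1 by simp
  have tail: "measure_pmf.prob P {s. \<Phi> s - measure_pmf.expectation P \<Phi> \<ge> t} \<le> \<delta>"
  proof -
    have "measure_pmf.prob P {s. \<Phi> s - measure_pmf.expectation P \<Phi> \<ge> t} \<le> exp (- 2 * t\<^sup>2 / C)"
      unfolding PI C_def using Cp[unfolded C_def] finpp by (intro mcd_tail[OF finI _ bd tp]) auto
    also have "- 2 * t\<^sup>2 / C = - ln (1 / \<delta>)" unfolding t2 using Cp by simp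
    also have "exp (- ln (1 / \<delta>)) = \<delta>" using assms(5) by (simp add: ln_div)
    finally show ?thesis .
  qed

  have sym: "measure_pmf.expectation P \<Phi> \<le> rad_auc m w y n ns D QQ"
  proof -
    define \<Psi> where "\<Psi> z = (SUP Q\<in>QQ. e Q (snd z) - e Q (fst z))" for z :: "(nat \<times> nat \<Rightarrow> nat) \<times> (nat \<times> nat \<Rightarrow> nat)"
    have bdd\<Psi>: "bdd_above ((\<lambda>Q. e Q (snd z) - e Q (fst z)) ` QQ)" for z
    proof (rule bdd_aboveI2[where M = "real n"])
      fix Q assume "Q \<in> QQ"
      then show "e Q (snd z) - e Q (fst z) \<le> real n" using eb[of Q "snd z"] eb[of Q "fst z"] by linarith
    qed
    define G where "G \<nu> s = (SUP Q\<in>QQ. (1 / real m) * (\<Sum>i<m. \<nu> i * u Q s i))" for \<nu> :: "nat \<Rightarrow> real" and s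
    have bddG: "bdd_above ((\<lambda>Q. (1 / real m) * (\<Sum>i<m. \<nu> i * u Q s i)) ` QQ)" for \<nu> s
    proof (rule bdd_aboveI2[where M = "(1 / real m) * (\<Sum>i<m. \<bar>\<nu> i\<bar> * real n)"])
      fix Q assume Q: "Q \<in> QQ"
      have "(\<Sum>i<m. \<nu> i * u Q s i) \<le> (\<Sum>i<m. \<bar>\<nu> i\<bar> * real n)"
      proof (rule sum_mono)
        fix i assume "i \<in> {..<m}"
        then have "0 \<le> u Q s i" "u Q s i \<le> real n" using ub[OF Q, of i s] by auto
        then have "\<nu> i * u Q s i \<le> \<bar>\<nu> i\<bar> * u Q s i" by (intro mult_right_mono) auto
        also have "\<dots> \<le> \<bar>\<nu> i\<bar> * real n" using \<open>u Q s i \<le> real n\<close> by (intro mult_left_mono) auto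
        finally show "\<nu> i * u Q s i \<le> \<bar>\<nu> i\<bar> * real n" .
      qed
      then show "(1 / real m) * (\<Sum>i<m. \<nu> i * u Q s i) \<le> (1 / real m) * (\<Sum>i<m. \<bar>\<nu> i\<bar> * real n)"
        by (intro mult_left_mono) auto
    qed
    have radeq: "rad_auc m w y n ns D QQ = measure_pmf.expectation P (\<lambda>s. 2 * measure_pmf.expectation R (\<lambda>\<nu>. G \<nu> s))"
      unfolding rad_auc_def emp_rad_auc_def P_def R_def G_def u_def ..
    have S1: "\<Phi> s \<le> measure_pmf.expectation P (\<lambda>s'. \<Psi> (s, s'))" for s
      unfolding \<Phi>_def
    proof (rule cSUP_least[OF QQne])
      fix Q assume Q: "Q \<in> QQ"
      have "tr Q - e Q s = measure_pmf.expectation P (\<lambda>s'. e Q s' - e Q s)"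
        unfolding tr_eq by (simp add: fexp_diff[OF finP])
      also have "\<dots> \<le> measure_pmf.expectation P (\<lambda>s'. \<Psi> (s, s'))"
      proof (rule fexp_mono[OF finP])
        fix s' show "e Q s' - e Q s \<le> \<Psi> (s, s')"
          unfolding \<Psi>_def using cSUP_upper[OF Q bdd\<Psi>[of "(s, s')"]] by simp
      qed
      finally show "tr Q - e Q s \<le> measure_pmf.expectation P (\<lambda>s'. \<Psi> (s, s'))" .
    qed
    have S2: "measure_pmf.expectation P \<Phi> \<le> measure_pmf.expectation (pair_pmf P P) \<Psi>"
      unfolding fexp_pair[OF finP finP] by (rule fexp_mono[OF finP S1])
    define T where "T \<nu> = (\<lambda>(a::nat \<times> nat \<Rightarrow> nat, b::nat \<times> nat \<Rightarrow> nat).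
        (\<lambda>x. if \<nu> (fst x) = (1::real) then a x else b x, \<lambda>x. if \<nu> (fst x) = 1 then b x else a x))" for \<nu>
    have S3: "measure_pmf.expectation (pair_pmf P P) \<Psi> = measure_pmf.expectation (pair_pmf P P) (\<lambda>z. \<Psi> (T \<nu> z))" for \<nu>
    proof -
      have "map_pmf (T \<nu>) (pair_pmf P P) = pair_pmf P P"
        unfolding PI T_def by (rule swap_pair_Pi[OF finI])
      then have "measure_pmf.expectation (pair_pmf P P) \<Psi> = measure_pmf.expectation (map_pmf (T \<nu>) (pair_pmf P P)) \<Psi>"
        by simp
      then show ?thesis by simp
    qed
    have S4: "\<Psi> (T \<nu> z) \<le> G \<nu> (snd z) + G (\<lambda>i. - \<nu> i) (fst z)" if \<nu>: "\<nu> \<in> set_pmf R" for \<nu> z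
    proof -
      obtain s s' where z: "z = (s, s')" by (cases z)
      let ?a = "fst (T \<nu> z)" and ?b = "snd (T \<nu> z)"
      have per: "u Q ?b i - u Q ?a i = \<nu> i * u Q s' i + (- \<nu> i) * u Q s i" if i: "i < m" for Q i
      proof (cases "\<nu> i = 1")
        case True
        have "u Q ?b i = u Q s' i" unfolding u_def by (rule ut_cong) (simp add: T_def z True)
        moreover have "u Q ?a i = u Q s i" unfolding u_def by (rule ut_cong) (simp add: T_def z True)
        ultimately show ?thesis using True by simp
      next
        case False
        then have m1': "\<nu> i = -1" using suppR[OF \<nu> i] by auto
        have "u Q ?b i = u Q s i" unfolding u_def by (rule ut_cong) (simp add: T_def z False)
        moreover have "u Q ?a i = u Q s' i" unfolding u_def by (rule ut_cong) (simp add: T_def z False)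
        ultimately show ?thesis using m1' by simp
      qed
      have diff: "e Q ?b - e Q ?a = (1 / real m) * (\<Sum>i<m. \<nu> i * u Q s' i) + (1 / real m) * (\<Sum>i<m. (- \<nu> i) * u Q s i)" for Q
      proof -
        have "e Q ?b - e Q ?a = (1 / real m) * (\<Sum>i<m. u Q ?b i - u Q ?a i)"
          unfolding e_eq by (simp add: sum_subtractf right_diff_distrib)
        also have "(\<Sum>i<m. u Q ?b i - u Q ?a i) = (\<Sum>i<m. \<nu> i * u Q s' i + (- \<nu> i) * u Q s i)"
          by (rule sum.cong) (auto simp: per)
        finally show ?thesis by (simp add: sum.distrib sum_subtractf sum_negf add_divide_distrib diff_divide_distrib)
      qed
      show ?thesis
        unfolding \<Psi>_def
      proof (rule cSUP_least[OF QQne])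
        fix Q assume Q: "Q \<in> QQ"
        have "(1 / real m) * (\<Sum>i<m. \<nu> i * u Q s' i) \<le> G \<nu> s'"
          unfolding G_def by (rule cSUP_upper[OF Q bddG])
        moreover have "(1 / real m) * (\<Sum>i<m. (- \<nu> i) * u Q s i) \<le> G (\<lambda>i. - \<nu> i) s"
          unfolding G_def by (rule cSUP_upper[OF Q bddG])
        moreover have zs: "snd z = s'" "fst z = s" by (simp_all add: z)
        ultimately show "e Q ?b - e Q ?a \<le> G \<nu> (snd z) + G (\<lambda>i. - \<nu> i) (fst z)"
          unfolding zs(1) zs(2) using diff[of Q] by linarith
      qed
    qed
    have negR: "measure_pmf.expectation R (\<lambda>\<nu>. G (\<lambda>i. - \<nu> i) s) = measure_pmf.expectation R (\<lambda>\<nu>. G \<nu> s)" for s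
    proof -
      have "measure_pmf.expectation R (\<lambda>\<nu>. G (\<lambda>i. - \<nu> i) s)
          = measure_pmf.expectation (map_pmf (\<lambda>\<nu> i. - \<nu> i) R) (\<lambda>\<nu>. G \<nu> s)" by simp
      also have "map_pmf (\<lambda>\<nu> i. - \<nu> i) R = R" unfolding R_def by (rule rad_neg)
      finally show ?thesis .
    qed
    have "measure_pmf.expectation (pair_pmf P P) \<Psi>
        = measure_pmf.expectation R (\<lambda>\<nu>. measure_pmf.expectation (pair_pmf P P) (\<lambda>z. \<Psi> (T \<nu> z)))"
      by (simp add: S3[symmetric])
    also have "\<dots> \<le> measure_pmf.expectation R (\<lambda>\<nu>. measure_pmf.expectation (pair_pmf P P)
                 (\<lambda>z. G \<nu> (snd z) + G (\<lambda>i. - \<nu> i) (fst z)))"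
      by (intro fexp_mono[OF finR] fexp_mono[OF finPP] S4)
    also have "\<dots> = measure_pmf.expectation R (\<lambda>\<nu>. measure_pmf.expectation P (G \<nu>)
                 + measure_pmf.expectation P (G (\<lambda>i. - \<nu> i)))"
    proof (rule fexp_cong[OF finR])
      fix \<nu>
      show "measure_pmf.expectation (pair_pmf P P) (\<lambda>z. G \<nu> (snd z) + G (\<lambda>i. - \<nu> i) (fst z))
          = measure_pmf.expectation P (G \<nu>) + measure_pmf.expectation P (G (\<lambda>i. - \<nu> i))"
        by (simp add: fexp_pair[OF finP finP] fexp_add[OF finP] add.commute)
    qed
    also have "\<dots> = measure_pmf.expectation R (\<lambda>\<nu>. measure_pmf.expectation P (\<lambda>s. G \<nu> s))
        + measure_pmf.expectation R (\<lambda>\<nu>. measure_pmf.expectation P (\<lambda>s. G (\<lambda>i. - \<nu> i) s))"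
      by (simp add: fexp_add[OF finR])
    also have "\<dots> = measure_pmf.expectation P (\<lambda>s. measure_pmf.expectation R (\<lambda>\<nu>. G \<nu> s))
        + measure_pmf.expectation P (\<lambda>s. measure_pmf.expectation R (\<lambda>\<nu>. G (\<lambda>i. - \<nu> i) s))"
      by (simp add: fexp_swap[OF finR finP])
    also have "\<dots> = measure_pmf.expectation P (\<lambda>s. 2 * measure_pmf.expectation R (\<lambda>\<nu>. G \<nu> s))"
      by (simp add: negR fexp_cmult[OF finP])
    also have "\<dots> = rad_auc m w y n ns D QQ" by (rule radeq[symmetric])
    finally show ?thesis using S2 by linarith
  qed

  have sub: "{s. \<Phi> s - measure_pmf.expectation P \<Phi> < t} \<subseteq>
          {s. \<forall>Q\<in>QQ. true_risk m w y n ns D Q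
                 \<le> emp_risk m w y n ns Q s + rad_auc m w y n ns D QQ
                   + sqrt (ln (1 / \<delta>) * (real n - 1)^2 / (2 * real m ^ 2)
                       * (\<Sum>i<m. 1 / (real (ns i) * real (n - ns i) ^ 2)))}"
  proof (intro subsetI CollectI ballI)
    fix s Q assume s: "s \<in> {s. \<Phi> s - measure_pmf.expectation P \<Phi> < t}" and Q: "Q \<in> QQ"
    have "tr Q - e Q s \<le> \<Phi> s" by (rule \<Phi>_ge[OF Q])
    then show "true_risk m w y n ns D Q \<le> emp_risk m w y n ns Q s + rad_auc m w y n ns D QQ
                   + sqrt (ln (1 / \<delta>) * (real n - 1)^2 / (2 * real m ^ 2)
                       * (\<Sum>i<m. 1 / (real (ns i) * real (n - ns i) ^ 2)))"
      using s sym unfolding tr_def e_def t_def SS_def by simp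
  qed
  have "1 - \<delta> \<le> 1 - measure_pmf.prob P {s. \<Phi> s - measure_pmf.expectation P \<Phi> \<ge> t}"
    using tail by simp
  also have "\<dots> = measure_pmf.prob P (UNIV - {s. \<Phi> s - measure_pmf.expectation P \<Phi> \<ge> t})"
    using measure_pmf.prob_compl[of "{s. \<Phi> s - measure_pmf.expectation P \<Phi> \<ge> t}" P] by simp
  also have "UNIV - {s. \<Phi> s - measure_pmf.expectation P \<Phi> \<ge> t} = {s. \<Phi> s - measure_pmf.expectation P \<Phi> < t}"
    by auto
  also have "measure_pmf.prob P \<dots> \<le> measure_pmf.prob P {s. \<forall>Q\<in>QQ. true_risk m w y n ns D Q
                 \<le> emp_risk m w y n ns Q s + rad_auc m w y n ns D QQ
                   + sqrt (ln (1 / \<delta>) * (real n - 1)^2 / (2 * real m ^ 2)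
                       * (\<Sum>i<m. 1 / (real (ns i) * real (n - ns i) ^ 2)))}"
    by (rule measure_pmf.finite_measure_mono[OF sub]) auto
  finally show ?thesis unfolding P_def .
qed

end
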